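(* Let $p>q$ be even positive integers and let $g_{i,j}\in\{1,-1\}$ for $i=1,\dots,q$ and $j=1,\dots,p-q$. Put $\eta_i'=\sigma_1^{g_{i,1}}\sigma_2^{g_{i,2}}\cdots\sigma_{p-q-1}^{g_{i,p-q-1}}$, $\eta_i=\eta_i'\,\sigma_{p-q}^{g_{i,p-q}}$, and \[\kappa_i=\sigma_{p-q+1}^{-1}\sigma_{p-q+2}^{-1}\cdots\sigma_{p-i}^{-1}\,\sigma_{p-i+1}\cdots\sigma_{p-1}\qquad(i=1,\dots,q),\] (so $\kappa_1=\sigma_{p-q+1}^{-1}\cdots\sigma_{p-1}^{-1}$ and $\kappa_q=\sigma_{p-q+1}\cdots\sigma_{p-1}$). Then \[\eta_1\kappa_1\eta_2\kappa_2\cdots\eta_q\kappa_q\ \sim_M\ \eta_1'\eta_2'\cdots\eta_q'.\]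
   Context: $\sigma_1,\sigma_2,\dots$ denote the standard Artin generators of the braid groups. Two braids (possibly with different numbers of strands) are Markov equivalent, written $\sim_M$, if their closures are isotopic links. *)

theory Defs
  imports Main
begin

text \<open>A letter (i, True) stands for the Artin generator sigma_i, (i, False) for its inverse.
  A braid word on n strands uses only indices 1 \<le> i \<le> n - 1.\<close>

type_synonym bletter = "nat \<times> bool"
type_synonym bword = "bletter list"

definition valid_word :: "nat \<Rightarrow> bword \<Rightarrow> bool" where
  "valid_word n w \<longleftrightarrow> (\<forall>x \<in> set w. 1 \<le> fst x \<and> fst x < n)"

inductive braid_eq :: "nat \<Rightarrow> bword \<Rightarrow> bword \<Rightarrow> bool" for n :: nat where
  refl: "valid_word n w \<Longrightarrow> braid_eq n w w"
| sym: "braid_eq n u v \<Longrightarrow> braid_eq n v u"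
| trans: "braid_eq n u v \<Longrightarrow> braid_eq n v w \<Longrightarrow> braid_eq n u w"
| cancel: "valid_word n (u @ v) \<Longrightarrow> 1 \<le> i \<Longrightarrow> i < n \<Longrightarrow>
      braid_eq n (u @ [(i, e), (i, \<not> e)] @ v) (u @ v)"
| far_comm: "valid_word n (u @ v) \<Longrightarrow> 1 \<le> i \<Longrightarrow> i < n \<Longrightarrow> 1 \<le> j \<Longrightarrow> j < n \<Longrightarrow>
      i + 1 < j \<Longrightarrow> braid_eq n (u @ [(i, e), (j, f)] @ v) (u @ [(j, f), (i, e)] @ v)"
| braid_rel: "valid_word n (u @ v) \<Longrightarrow> 1 \<le> i \<Longrightarrow> i + 1 < n \<Longrightarrow>
      braid_eq n (u @ [(i, True), (i + 1, True), (i, True)] @ v)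
                 (u @ [(i + 1, True), (i, True), (i + 1, True)] @ v)"

text \<open>By Markov's theorem this is exactly the relation
  "the closures are isotopic links".\<close>

inductive markov_eq :: "nat \<times> bword \<Rightarrow> nat \<times> bword \<Rightarrow> bool" (infix "\<sim>\<^sub>M" 50) where
  braid: "braid_eq n w w' \<Longrightarrow> (n, w) \<sim>\<^sub>M (n, w')"
| conj: "valid_word n (a @ b) \<Longrightarrow> (n, a @ b) \<sim>\<^sub>M (n, b @ a)"
| stab: "valid_word n w \<Longrightarrow> 1 \<le> n \<Longrightarrow> (n, w) \<sim>\<^sub>M (Suc n, w @ [(n, e)])"
| sym: "x \<sim>\<^sub>M y \<Longrightarrow> y \<sim>\<^sub>M x"
| trans: "x \<sim>\<^sub>M y \<Longrightarrow> y \<sim>\<^sub>M z \<Longrightarrow> x \<sim>\<^sub>M z"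

definition gen :: "nat \<Rightarrow> int \<Rightarrow> bletter" where
  "gen i g = (i, g = 1)"

definition eta' :: "nat \<Rightarrow> nat \<Rightarrow> (nat \<Rightarrow> nat \<Rightarrow> int) \<Rightarrow> nat \<Rightarrow> bword" where
  "eta' p q g i = map (\<lambda>j. gen j (g i j)) [1..<p - q]"

definition eta :: "nat \<Rightarrow> nat \<Rightarrow> (nat \<Rightarrow> nat \<Rightarrow> int) \<Rightarrow> nat \<Rightarrow> bword" where
  "eta p q g i = eta' p q g i @ [gen (p - q) (g i (p - q))]"

definition kappa :: "nat \<Rightarrow> nat \<Rightarrow> nat \<Rightarrow> bword" where
  "kappa p q i = map (\<lambda>k. (k, False)) [p - q + 1..<p - i + 1] @ map (\<lambda>k. (k, True)) [p - i + 1..<p]"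

end

theory Submission
  imports Defs
begin



definition binv :: "bword \<Rightarrow> bword" where
  "binv w = rev (map (\<lambda>x. (fst x, \<not> snd x)) w)"

definition up :: "nat \<Rightarrow> nat \<Rightarrow> bword" where
  "up a r = map (\<lambda>k. (k, True)) [a..<a+r]"

lemma valid_Nil[simp]: "valid_word n []"
  by (simp add: valid_word_def)

lemma valid_append[simp]: "valid_word n (a @ b) = (valid_word n a \<and> valid_word n b)"
  by (auto simp: valid_word_def)

lemma valid_Cons[simp]: "valid_word n (x # b) = (1 \<le> fst x \<and> fst x < n \<and> valid_word n b)"
  by (auto simp: valid_word_def)

lemma inv_Nil[simp]: "binv [] = []" by (simp add: binv_def)
lemma inv_append[simp]: "binv (a @ b) = binv b @ binv a" by (simp add: binv_def)
lemma inv_Cons: "binv (x # b) = binv b @ [(fst x, \<not> snd x)]" by (simp add: binv_def)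
lemma inv_inv[simp]: "binv (binv w) = w" by (induct w) (auto simp: binv_def)
lemma valid_inv[simp]: "valid_word n (binv w) = valid_word n w"
  by (auto simp: valid_word_def binv_def)

lemma up_0[simp]: "up a 0 = []" by (simp add: up_def)
lemma up_Suc: "up a (Suc r) = up a r @ [(a + r, True)]" by (simp add: up_def)
lemma valid_up: "1 \<le> a \<Longrightarrow> a + r \<le> n \<Longrightarrow> valid_word n (up a r)"
  by (auto simp: up_def valid_word_def)
lemma set_up: "set (up a r) = (\<lambda>k. (k,True)) ` {a..<a+r}" by (simp add: up_def)
lemma set_inv: "set (binv w) = (\<lambda>x. (fst x, \<not> snd x)) ` set w" by (simp add: binv_def)

lemma valid_mono: "valid_word n w \<Longrightarrow> n \<le> n' \<Longrightarrow> valid_word n' w"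
  by (auto simp: valid_word_def)

lemma beq_valid: "braid_eq n u v \<Longrightarrow> valid_word n u \<and> valid_word n v"
  by (induct rule: braid_eq.induct) auto

lemma beq_ctx: "braid_eq n u v \<Longrightarrow> valid_word n a \<Longrightarrow> valid_word n b \<Longrightarrow>
   braid_eq n (a @ u @ b) (a @ v @ b)"
proof (induct rule: braid_eq.induct)
  case (refl w) then show ?case by (auto intro: braid_eq.refl)
next
  case (sym u v) then show ?case by (auto intro: braid_eq.sym)
next
  case (trans u v w) then show ?case by (auto intro: braid_eq.trans)
next
  case (cancel u v i e)
  then show ?case using braid_eq.cancel[of n "a @ u" "v @ b" i e] by simp
next
  case (far_comm u v i j e f)
  then show ?case using braid_eq.far_comm[of n "a @ u" "v @ b" i j e f] by simp
next
  case (braid_rel u v i)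
  then show ?case using braid_eq.braid_rel[of n "a @ u" "v @ b" i] by simp
qed

lemma beq_app: "braid_eq n u u' \<Longrightarrow> braid_eq n v v' \<Longrightarrow> braid_eq n (u @ v) (u' @ v')"
proof -
  assume a: "braid_eq n u u'" and b: "braid_eq n v v'"
  have "braid_eq n ([] @ u @ v) ([] @ u' @ v)" using beq_ctx[OF a, of "[]" v] beq_valid[OF b] by simp
  moreover have "braid_eq n (u' @ v @ []) (u' @ v' @ [])" using beq_ctx[OF b, of u' "[]"] beq_valid[OF a] by simp
  ultimately show ?thesis by (auto intro: braid_eq.trans)
qed

lemma beq_refl: "valid_word n w \<Longrightarrow> braid_eq n w w" by (rule braid_eq.refl)

definition far :: "bletter \<Rightarrow> bletter \<Rightarrow> bool" where
  "far x y \<longleftrightarrow> fst y + 1 < fst x \<or> fst x + 1 < fst y"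

lemma comm1: "valid_word n [x] \<Longrightarrow> valid_word n w \<Longrightarrow> \<forall>y\<in>set w. far x y \<Longrightarrow>
   braid_eq n (x # w) (w @ [x])"
proof (induct w)
  case Nil then show ?case by (auto intro: braid_eq.refl)
next
  case (Cons y w)
  have 1: "braid_eq n (x # y # w) (y # x # w)"
  proof -
    obtain i e where x: "x = (i,e)" by (cases x)
    obtain j f where y: "y = (j,f)" by (cases y)
    have fr: "j + 1 < i \<or> i + 1 < j" using Cons.prems by (simp add: far_def x y)
    show ?thesis
    proof (cases "i + 1 < j")
      case True
      then show ?thesis using braid_eq.far_comm[of n "[]" w i j e f] Cons.prems by (simp add: x y)
    next
      case False
      then have "j + 1 < i" using fr by simp
      then show ?thesis using braid_eq.far_comm[of n "[]" w j i f e] Cons.prems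
        by (auto simp: x y intro: braid_eq.sym)
    qed
  qed
  have 2: "braid_eq n ([y] @ (x # w) @ []) ([y] @ (w @ [x]) @ [])"
    using Cons by (intro beq_ctx) auto
  show ?case using braid_eq.trans[OF 1] 2 by simp
qed

lemma comm_words: "valid_word n a \<Longrightarrow> valid_word n b \<Longrightarrow> \<forall>x\<in>set a. \<forall>y\<in>set b. far x y \<Longrightarrow>
   braid_eq n (a @ b) (b @ a)"
proof (induct a)
  case Nil then show ?case by (auto intro: braid_eq.refl)
next
  case (Cons x a)
  have 1: "braid_eq n ([x] @ (a @ b) @ []) ([x] @ (b @ a) @ [])"
    using Cons by (intro beq_ctx) auto
  have 2: "braid_eq n ([] @ (x # b) @ a) ([] @ (b @ [x]) @ a)"
    using Cons by (intro beq_ctx comm1) auto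
  show ?case using braid_eq.trans[OF 1] 2 by simp
qed

lemma cancel_inv: "valid_word n w \<Longrightarrow> braid_eq n (w @ binv w) []"
proof (induct w)
  case Nil then show ?case by (auto intro: braid_eq.refl)
next
  case (Cons x w)
  have 1: "braid_eq n ([x] @ (w @ binv w) @ [(fst x, \<not> snd x)]) ([x] @ [] @ [(fst x, \<not> snd x)])"
    using Cons by (intro beq_ctx) auto
  have 2: "braid_eq n ([] @ [(fst x, snd x), (fst x, \<not> snd x)] @ []) ([] @ [])"
    using Cons.prems by (intro braid_eq.cancel) auto
  show ?case using braid_eq.trans[OF 1] 2 by (simp add: inv_Cons)
qed

lemma cancel_inv2: "valid_word n w \<Longrightarrow> braid_eq n (binv w @ w) []"
  using cancel_inv[of n "binv w"] by simp

lemma inv_resp: "braid_eq n a b \<Longrightarrow> braid_eq n (binv a) (binv b)"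
proof -
  assume ab: "braid_eq n a b"
  from beq_valid[OF ab] have va: "valid_word n a" and vb: "valid_word n b" by auto
  have 1: "braid_eq n (binv a @ [] @ []) (binv a @ (b @ binv b) @ [])"
    using beq_ctx[OF braid_eq.sym[OF cancel_inv[OF vb]], of "binv a" "[]"] va by simp
  have 2: "braid_eq n ([] @ (binv a @ b) @ binv b) ([] @ (binv a @ a) @ binv b)"
    using beq_ctx[OF beq_app[OF beq_refl braid_eq.sym[OF ab], of "binv a"], of "[]" "binv b"] va vb by simp
  have 3: "braid_eq n ([] @ (binv a @ a) @ binv b) ([] @ [] @ binv b)"
    using cancel_inv2[OF va] vb by (intro beq_ctx) auto
  show ?thesis using braid_eq.trans[OF braid_eq.trans[OF 1[simplified] 2[simplified]] 3[simplified]] by simp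
qed



lemma rel3_pos: "1 \<le> i \<Longrightarrow> i + 1 < n \<Longrightarrow>
  braid_eq n [(i+1,False),(i,True),(i+1,True)] [(i,True),(i+1,True),(i,False)]"
proof -
  assume h: "1 \<le> i" "i + 1 < n"
  have 1: "braid_eq n ([(i+1,False),(i,True),(i+1,True)] @ [(i,True),(i,\<not>True)] @ [])
                      ([(i+1,False),(i,True),(i+1,True)] @ [])"
    using h by (intro braid_eq.cancel) auto
  have 2: "braid_eq n ([(i+1,False)] @ [(i, True), (i + 1, True), (i, True)] @ [(i,False)])
                      ([(i+1,False)] @ [(i+1, True), (i, True), (i+1, True)] @ [(i,False)])"
    using h by (intro braid_eq.braid_rel) auto
  have 3: "braid_eq n ([] @ [(i+1,False),(i+1,\<not>False)] @ [(i,True),(i+1,True),(i,False)])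
                      ([] @ [(i,True),(i+1,True),(i,False)])"
    using h by (intro braid_eq.cancel) auto
  show ?thesis using braid_eq.trans[OF braid_eq.sym[OF 1[simplified]] braid_eq.trans[OF 2[simplified] 3[simplified]]]
    by simp
qed

lemma rel3: "1 \<le> i \<Longrightarrow> i + 1 < n \<Longrightarrow>
  braid_eq n [(i+1,False),(i,e),(i+1,True)] [(i,True),(i+1,e),(i,False)]"
proof (cases e)
  case True
  assume "1 \<le> i" "i + 1 < n" then show ?thesis using rel3_pos True by simp
next
  case False
  assume "1 \<le> i" "i + 1 < n"
  from inv_resp[OF rel3_pos[OF this]] show ?thesis using False by (simp add: binv_def)
qed

lemma conj_lemma: "1 \<le> b \<Longrightarrow> b + r < n \<Longrightarrow>
  braid_eq n (binv (up (b+1) r) @ [(b,e)] @ up (b+1) r) (up b r @ [(b+r,e)] @ binv (up b r))"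
proof (induct r)
  case 0 then show ?case by (auto intro: braid_eq.refl)
next
  case (Suc r)
  define x where "x = b + r + 1"
  have vu: "valid_word n (up b r)" using Suc.prems by (intro valid_up) auto
  have vu1: "valid_word n (up (b+1) r)" using Suc.prems by (intro valid_up) auto
  have IH: "braid_eq n (binv (up (b+1) r) @ [(b,e)] @ up (b+1) r) (up b r @ [(b+r,e)] @ binv (up b r))"
    using Suc by auto
  have 1: "braid_eq n ([(x,False)] @ (binv (up (b+1) r) @ [(b,e)] @ up (b+1) r) @ [(x,True)])
                      ([(x,False)] @ (up b r @ [(b+r,e)] @ binv (up b r)) @ [(x,True)])"
    using IH Suc.prems by (intro beq_ctx) (auto simp: x_def)
  have fr: "\<forall>y\<in>set (up b r). far (x,f) y" for f
    by (auto simp: set_up far_def x_def)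
  have fr2: "\<forall>y\<in>set (binv (up b r)). far (x,f) y" for f
    by (auto simp: set_inv set_up far_def x_def)
  have 2: "braid_eq n ([] @ ((x,False) # up b r) @ ([(b+r,e)] @ binv (up b r) @ [(x,True)]))
                      ([] @ (up b r @ [(x,False)]) @ ([(b+r,e)] @ binv (up b r) @ [(x,True)]))"
    using Suc.prems vu fr by (intro beq_ctx comm1) (auto simp: x_def)
  have 3: "braid_eq n ((up b r @ [(x,False), (b+r,e)]) @ ((x,True) # binv (up b r)) @ [])
                      ((up b r @ [(x,False), (b+r,e)]) @ (binv (up b r) @ [(x,True)]) @ [])"
    by (rule beq_ctx, rule comm1) (use Suc.prems vu fr2 in \<open>auto simp: x_def\<close>)
  have 4: "braid_eq n (up b r @ [(b+r+1,False),(b+r,e),(b+r+1,True)] @ binv (up b r))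
                      (up b r @ [(b+r,True),(b+r+1,e),(b+r,False)] @ binv (up b r))"
    using Suc.prems vu by (intro beq_ctx rel3) auto
  have eq1: "binv (up (b+1) (Suc r)) @ [(b,e)] @ up (b+1) (Suc r)
     = [(x,False)] @ (binv (up (b+1) r) @ [(b,e)] @ up (b+1) r) @ [(x,True)]"
    by (simp add: up_Suc binv_def x_def)
  have eq2: "up b (Suc r) @ [(b + Suc r,e)] @ binv (up b (Suc r))
     = up b r @ [(b+r,True),(b+r+1,e),(b+r,False)] @ binv (up b r)"
    by (simp add: up_Suc binv_def)
  show ?case unfolding eq1 eq2
    using braid_eq.trans[OF 1[unfolded x_def, simplified]
      braid_eq.trans[OF 2[unfolded x_def, simplified]
      braid_eq.trans[OF braid_eq.sym[OF 3[unfolded x_def, simplified]] 4[simplified]]]]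
    by (simp add: x_def)
qed



lemmas [trans] = braid_eq.trans

lemma beq_left: "valid_word n X \<Longrightarrow> braid_eq n Y Y' \<Longrightarrow> braid_eq n (X @ Y) (X @ Y')"
  using beq_ctx[of n Y Y' X "[]"] by (simp add: beq_valid)

lemma beq_right: "valid_word n X \<Longrightarrow> braid_eq n Y Y' \<Longrightarrow> braid_eq n (Y @ X) (Y' @ X)"
  using beq_ctx[of n Y Y' "[]" X] by (simp add: beq_valid)

lemma valid_kappa: "1 \<le> i \<Longrightarrow> valid_word P (kappa P Q i)"
  by (auto simp: kappa_def valid_word_def)

lemma valid_concat: "(\<And>x. x \<in> set xs \<Longrightarrow> valid_word n x) \<Longrightarrow> valid_word n (concat xs)"
  by (induct xs) auto

lemma P_lemma:
  fixes m q :: nat and W :: "nat \<Rightarrow> bword"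
  assumes m1: "1 \<le> m" and q2: "2 \<le> q" and vW: "\<And>i. 1 \<le> i \<Longrightarrow> i \<le> q \<Longrightarrow> valid_word (m+1) (W i)"
  shows "k \<le> q - 1 \<Longrightarrow> braid_eq (m+q) (concat (map (\<lambda>i. W i @ kappa (m+q) q i) [1..<k+1]))
     (concat (map (\<lambda>i. W i @ kappa (m+q-1) (q-1) i) [1..<k+1]) @ binv (up (m+q-k) k))"
proof (induct k)
  case 0
  then show ?case by (auto intro: braid_eq.refl)
next
  case (Suc k)
  define j where "j = Suc k"
  define c where "c = m + q - j"
  define A where "A = map (\<lambda>k. (k, False)) [m+1..<c]"
  define P where "P = concat (map (\<lambda>i. W i @ kappa (m+q) q i) [1..<k+1])"
  define P' where "P' = concat (map (\<lambda>i. W i @ kappa (m+q-1) (q-1) i) [1..<k+1])"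
  have jq: "j \<le> q - 1" "1 \<le> j" using Suc.prems by (auto simp: j_def)
  have c1: "m + 1 \<le> c" "c + k = m + q - 1" "c + 1 + k = m + q" using jq q2 by (auto simp: c_def j_def)
  have vP': "valid_word (m+q) P'"
    unfolding P'_def
  proof (intro valid_concat)
    fix x assume "x \<in> set (map (\<lambda>i. W i @ kappa (m+q-1) (q-1) i) [1..<k+1])"
    then obtain i where i: "1 \<le> i" "i \<le> k" "x = W i @ kappa (m+q-1) (q-1) i" by auto
    have "valid_word (m+1) (W i)" using vW[of i] i Suc.prems by auto
    then have "valid_word (m+q) (W i)" by (rule valid_mono) (use q2 in simp)
    moreover have "valid_word (m+q) (kappa (m+q-1) (q-1) i)"
      using valid_kappa[OF i(1), of "m+q-1" "q-1"] by (rule valid_mono) simp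
    ultimately show "valid_word (m+q) x" using i by simp
  qed
  have vWj1: "valid_word (m+1) (W j)" using vW[of j] jq by auto
  have vWj: "valid_word (m+q) (W j)" using vWj1 by (rule valid_mono) (use q2 in simp)
  have vZ: "valid_word (m+q) (binv (up (c+1) k))" using c1 by (auto intro!: valid_up)
  have vA: "valid_word (m+q) A" using c1 m1 by (auto simp: A_def valid_word_def)
  have vupc: "valid_word (m+q) (up c k)" using c1 m1 by (auto intro!: valid_up)
  have kap: "kappa (m+q) q j = A @ [(c,False)] @ up (c+1) k"
  proof -
    have a: "[m + 1..<c + 1] = [m+1..<c] @ [c]" using c1 by simp
    have b: "up (c+1) k = map (\<lambda>k. (k, True)) [c+1..<m+q]" using c1 by (simp add: up_def)
    have "kappa (m+q) q j = map (\<lambda>k. (k, False)) [m+1..<c+1] @ map (\<lambda>k. (k, True)) [c+1..<m+q]"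
      by (simp add: kappa_def c_def del: upt_Suc)
    then show ?thesis unfolding b A_def a by simp
  qed
  have kap': "kappa (m+q-1) (q-1) j = A @ up c k"
  proof -
    have b: "up c k = map (\<lambda>k. (k, True)) [c..<m+q-1]" using c1 by (simp add: up_def)
    have "kappa (m+q-1) (q-1) j = map (\<lambda>k. (k, False)) [m+1..<c] @ map (\<lambda>k. (k, True)) [c..<m+q-1]"
    proof -
      have "Suc (m + q - Suc j) = m + q - j" using q2 jq by simp
      then show ?thesis using q2 jq by (simp add: kappa_def c_def del: upt_Suc)
    qed
    then show ?thesis unfolding b A_def by simp
  qed
  have Zeq: "m + q - k = c + 1" using c1 by simp
  have Zeq2: "m + q - Suc k = c" by (simp add: c_def j_def)
  have IH: "braid_eq (m+q) P (P' @ binv (up (c+1) k))"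
    using Suc unfolding P_def P'_def Zeq by simp
  have "braid_eq (m+q) (P @ W j @ kappa (m+q) q j) ((P' @ binv (up (c+1) k)) @ W j @ kappa (m+q) q j)"
    using IH vWj by (intro beq_right) (auto intro: valid_kappa jq)
  also have "braid_eq (m+q) ((P' @ binv (up (c+1) k)) @ W j @ kappa (m+q) q j)
     (P' @ (W j @ binv (up (c+1) k)) @ kappa (m+q) q j)"
  proof -
    have "braid_eq (m+q) (binv (up (c+1) k) @ W j) (W j @ binv (up (c+1) k))"
    proof (rule comm_words[OF vZ vWj], intro ballI)
      fix x y assume "x \<in> set (binv (up (c+1) k))" "y \<in> set (W j)"
      then show "far x y" using vWj1 jq c1 by (auto simp: set_inv set_up far_def valid_word_def)
    qed
    from beq_ctx[OF this vP' valid_kappa[OF jq(2), of "m+q" q]] show ?thesis by simp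
  qed
  also have "braid_eq (m+q) (P' @ (W j @ binv (up (c+1) k)) @ kappa (m+q) q j)
     (P' @ W j @ A @ (binv (up (c+1) k) @ [(c,False)] @ up (c+1) k))"
  proof -
    have "braid_eq (m+q) (binv (up (c+1) k) @ A) (A @ binv (up (c+1) k))"
    proof (rule comm_words[OF vZ vA], intro ballI)
      fix x y assume "x \<in> set (binv (up (c+1) k))" "y \<in> set A"
      then show "far x y" by (auto simp: set_inv set_up far_def A_def)
    qed
    then have "braid_eq (m+q) ((P' @ W j) @ (binv (up (c+1) k) @ A) @ ([(c,False)] @ up (c+1) k))
        ((P' @ W j) @ (A @ binv (up (c+1) k)) @ ([(c,False)] @ up (c+1) k))"
      using vP' vWj c1 m1 by (intro beq_ctx) (auto intro!: valid_up)
    then show ?thesis unfolding kap by simp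
  qed
  also have "braid_eq (m+q) (P' @ W j @ A @ (binv (up (c+1) k) @ [(c,False)] @ up (c+1) k))
      (P' @ W j @ A @ (up c k @ [(c+k,False)] @ binv (up c k)))"
  proof -
    have "braid_eq (m+q) (binv (up (c+1) k) @ [(c,False)] @ up (c+1) k) (up c k @ [(c+k,False)] @ binv (up c k))"
      by (rule conj_lemma) (use c1 m1 in auto)
    then show ?thesis using vP' vWj vA by (intro beq_left) auto
  qed
  finally have fin: "braid_eq (m+q) (P @ W j @ kappa (m+q) q j)
      (P' @ W j @ A @ (up c k @ [(c+k,False)] @ binv (up c k)))" .
  have e1: "concat (map (\<lambda>i. W i @ kappa (m+q) q i) [1..<Suc k+1]) = P @ W j @ kappa (m+q) q j"
    by (simp add: P_def j_def)
  have e2: "concat (map (\<lambda>i. W i @ kappa (m+q-1) (q-1) i) [1..<Suc k+1]) @ binv (up (m+q - Suc k) (Suc k))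
     = P' @ W j @ A @ (up c k @ [(c+k,False)] @ binv (up c k))"
    unfolding Zeq2 using kap' by (simp add: P'_def j_def up_Suc binv_def)
  show ?case unfolding e1 e2 by (rule fin)
qed



lemmas [trans] = markov_eq.trans

definition beta :: "nat \<Rightarrow> nat \<Rightarrow> (nat \<Rightarrow> bword) \<Rightarrow> bword" where
  "beta m q W = concat (map (\<lambda>i. W i @ kappa (m+q) q i) [1..<q+1])"

lemma step_lemma:
  assumes m1: "1 \<le> m" and q2: "2 \<le> q" and vW: "\<And>i. 1 \<le> i \<Longrightarrow> i \<le> q \<Longrightarrow> valid_word (m+1) (W i)"
    and Wq: "W q = W' @ [(m,e)]" and vW': "valid_word m W'"
  shows "(m+q, beta m q W) \<sim>\<^sub>M (m+q-1, W' @ concat (map (\<lambda>i. W i @ kappa (m+q-1) (q-1) i) [1..<q]))"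
proof -
  define n where "n = m + q - 1"
  define P' where "P' = concat (map (\<lambda>i. W i @ kappa (m+q-1) (q-1) i) [1..<q])"
  define K where "K = up (m+1) (q-1)"
  define H where "H = up m (q-1)"
  have n: "Suc n = m + q" "m + q - 1 = n" using q2 by (auto simp: n_def)
  have vP'n: "valid_word n P'"
    unfolding P'_def
  proof (intro valid_concat)
    fix x assume "x \<in> set (map (\<lambda>i. W i @ kappa (m+q-1) (q-1) i) [1..<q])"
    then obtain i where i: "1 \<le> i" "i < q" "x = W i @ kappa (m+q-1) (q-1) i" by auto
    have "valid_word (m+1) (W i)" using vW[of i] i by auto
    then have "valid_word n (W i)" by (rule valid_mono) (use q2 in \<open>simp add: n_def\<close>)
    moreover have "valid_word n (kappa (m+q-1) (q-1) i)"
      using valid_kappa[OF i(1), of "m+q-1" "q-1"] by (simp add: n_def)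
    ultimately show "valid_word n x" using i by simp
  qed
  have vP': "valid_word (m+q) P'" using vP'n by (rule valid_mono) (simp add: n_def)
  have vW'n: "valid_word n W'" using vW' by (rule valid_mono) (use q2 in \<open>simp add: n_def\<close>)
  have vW'': "valid_word (m+q) W'" using vW' by (rule valid_mono) simp
  have vK: "valid_word (m+q) K" using m1 q2 by (auto simp: K_def intro!: valid_up)
  have vHn: "valid_word n H" using m1 q2 by (auto simp: H_def n_def intro!: valid_up)
  have vH: "valid_word (m+q) H" using vHn by (rule valid_mono) (simp add: n_def)
  have kq: "kappa (m+q) q q = K"
    using q2 by (simp add: kappa_def K_def up_def)
  have PL: "braid_eq (m+q) (concat (map (\<lambda>i. W i @ kappa (m+q) q i) [1..<q])) (P' @ binv K)"
    using P_lemma[OF m1 q2 vW, where k = "q-1"] q2 by (simp add: P'_def K_def)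
  have beq1: "beta m q W = concat (map (\<lambda>i. W i @ kappa (m+q) q i) [1..<q]) @ W' @ [(m,e)] @ K"
  proof -
    have "[1..<q+1] = [1..<q] @ [q]" using q2 by simp
    then show ?thesis unfolding beta_def by (simp add: Wq kq)
  qed
  have "braid_eq (m+q) (beta m q W) ((P' @ binv K) @ W' @ [(m,e)] @ K)"
    unfolding beq1 using PL vW'' vK m1 q2 by (intro beq_right) auto
  also have "braid_eq (m+q) ((P' @ binv K) @ W' @ [(m,e)] @ K) (P' @ (W' @ binv K) @ ([(m,e)] @ K))"
  proof -
    have "braid_eq (m+q) (binv K @ W') (W' @ binv K)"
    proof (rule comm_words)
      show "\<forall>x\<in>set (binv K). \<forall>y\<in>set W'. far x y"
        using vW' by (auto simp: K_def set_inv set_up far_def valid_word_def)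
    qed (use vK vW'' in auto)
    from beq_ctx[OF this vP', of "[(m,e)] @ K"] show ?thesis using m1 q2 vK by simp
  qed
  also have "braid_eq (m+q) (P' @ (W' @ binv K) @ ([(m,e)] @ K)) ((P' @ W') @ (H @ [(n,e)] @ binv H))"
  proof -
    have "braid_eq (m+q) (binv (up (m+1) (q-1)) @ [(m,e)] @ up (m+1) (q-1))
             (up m (q-1) @ [(m + (q-1), e)] @ binv (up m (q-1)))"
      by (rule conj_lemma) (use m1 q2 in auto)
    then have "braid_eq (m+q) (binv K @ [(m,e)] @ K) (H @ [(n,e)] @ binv H)"
      using q2 by (simp add: K_def H_def n_def)
    from beq_left[OF _ this, of "P' @ W'"] show ?thesis using vP' vW'' by simp
  qed
  finally have B: "braid_eq (m+q) (beta m q W) ((P' @ W') @ H @ [(n,e)] @ binv H)" .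
  have "(m+q, beta m q W) \<sim>\<^sub>M (m+q, P' @ W' @ H @ [(n,e)] @ binv H)"
    using markov_eq.braid[OF B] by simp
  also have "(m+q, P' @ W' @ H @ [(n,e)] @ binv H) \<sim>\<^sub>M (m+q, binv H @ P' @ W' @ H @ [(n,e)])"
    using markov_eq.conj[of "m+q" "P' @ W' @ H @ [(n,e)]" "binv H"] B beq_valid[OF B] by simp
  also have "(m+q, binv H @ P' @ W' @ H @ [(n,e)]) \<sim>\<^sub>M (n, binv H @ P' @ W' @ H)"
  proof -
    have "(n, (binv H @ P' @ W' @ H)) \<sim>\<^sub>M (Suc n, (binv H @ P' @ W' @ H) @ [(n,e)])"
      using vHn vP'n vW'n m1 q2 by (intro markov_eq.stab) (auto simp: n_def)
    then show ?thesis using n by (auto intro: markov_eq.sym)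
  qed
  also have "(n, binv H @ P' @ W' @ H) \<sim>\<^sub>M (n, H @ binv H @ P' @ W')"
    using markov_eq.conj[of n "binv H @ P' @ W'" H] vHn vP'n vW'n by simp
  also have "(n, H @ binv H @ P' @ W') \<sim>\<^sub>M (n, P' @ W')"
  proof -
    have "(n, (H @ binv H) @ (P' @ W')) \<sim>\<^sub>M (n, [] @ (P' @ W'))"
      using vP'n vW'n by (intro markov_eq.braid beq_right cancel_inv vHn) auto
    then show ?thesis by simp
  qed
  also have "(n, P' @ W') \<sim>\<^sub>M (n, W' @ P')"
    using markov_eq.conj[of n P' W'] vP'n vW'n by simp
  finally show ?thesis by (simp add: n_def P'_def)
qed



lemma valid_concat_map: "(\<And>x. valid_word n (f x)) \<Longrightarrow> valid_word n (concat (map f xs))"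
  by (induct xs) auto

lemma main_ind:
  assumes m1: "1 \<le> m"
  shows "(\<And>i. 2 \<le> i \<Longrightarrow> i \<le> Suc k \<Longrightarrow> W i = W' i @ [(m, E i)]) \<Longrightarrow>
    (\<And>i. 2 \<le> i \<Longrightarrow> i \<le> Suc k \<Longrightarrow> valid_word m (W' i)) \<Longrightarrow> valid_word (m+1) (W 1) \<Longrightarrow>
    (m + Suc k, beta m (Suc k) W) \<sim>\<^sub>M (m+1, concat (map W' [2..<Suc k+1]) @ W 1)"
proof (induct k arbitrary: W)
  case 0
  have "beta m (Suc 0) W = W 1" by (simp add: beta_def kappa_def)
  then show ?case using 0 by (auto intro: markov_eq.braid braid_eq.refl)
next
  case (Suc k)
  define q where "q = Suc (Suc k)"
  define W1 where "W1 = W(1 := W' q @ W 1)"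
  have vW: "valid_word (m+1) (W i)" if "1 \<le> i" "i \<le> q" for i
  proof (cases "i = 1")
    case True then show ?thesis using Suc.prems by simp
  next
    case False
    then have "W i = W' i @ [(m, E i)]" "valid_word m (W' i)" using that Suc.prems by (auto simp: q_def)
    then show ?thesis using m1 by (auto intro: valid_mono)
  qed
  have St: "(m+q, beta m q W) \<sim>\<^sub>M (m+q-1, W' q @ concat (map (\<lambda>i. W i @ kappa (m+q-1) (q-1) i) [1..<q]))"
    by (rule step_lemma[OF m1 _ vW]) (use Suc.prems in \<open>auto simp: q_def\<close>)
  have eqb: "W' q @ concat (map (\<lambda>i. W i @ kappa (m+q-1) (q-1) i) [1..<q]) = beta m (Suc k) W1"
  proof -
    have u: "[1..<q] = 1 # [2..<q]" by (simp add: q_def upt_conv_Cons numeral_2_eq_2)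
    have mp: "map (\<lambda>i. W i @ kappa (m+q-1) (q-1) i) [2..<q] = map (\<lambda>i. W1 i @ kappa (m+q-1) (q-1) i) [2..<q]"
      by (auto simp: W1_def)
    have bt: "beta m (Suc k) W1 = concat (map (\<lambda>i. W1 i @ kappa (m+q-1) (q-1) i) [1..<q])"
      by (simp add: beta_def q_def del: upt_Suc)
    show ?thesis unfolding bt u
      by (simp only: list.map concat.simps mp fun_upd_same W1_def append_assoc)
  qed
  have IH: "(m + Suc k, beta m (Suc k) W1) \<sim>\<^sub>M (m+1, concat (map W' [2..<Suc k+1]) @ W1 1)"
  proof (rule Suc.hyps)
    show "W1 i = W' i @ [(m, E i)]" if "2 \<le> i" "i \<le> Suc k" for i
      using Suc.prems(1)[of i] that by (auto simp: W1_def)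
    show "valid_word m (W' i)" if "2 \<le> i" "i \<le> Suc k" for i
      using Suc.prems(2)[of i] that by auto
    show "valid_word (m+1) (W1 1)"
      using Suc.prems(2)[of q] Suc.prems(3) m1 by (auto simp: W1_def q_def intro: valid_mono)
  qed
  have "concat (map W' [2..<Suc k+1]) @ W1 1 = concat (map W' [2..<Suc (Suc k)+1]) @ W 1"
    by (simp add: W1_def q_def)
  then show ?case using markov_eq.trans[OF St] IH eqb by (simp add: q_def)
qed

theorem lemma3p2:
  fixes p q :: nat and g :: "nat \<Rightarrow> nat \<Rightarrow> int"
  assumes "even p" and "even q" and "0 < q" and "q < p"
    and "\<And>i j. 1 \<le> i \<Longrightarrow> i \<le> q \<Longrightarrow> 1 \<le> j \<Longrightarrow> j \<le> p - q \<Longrightarrow> g i j \<in> {1, -1}"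
  shows "(p, concat (map (\<lambda>i. eta p q g i @ kappa p q i) [1..<q + 1]))
           \<sim>\<^sub>M (p - q, concat (map (\<lambda>i. eta' p q g i) [1..<q + 1]))"
proof -
  define m where "m = p - q"
  define k where "k = q - 1"
  have m1: "1 \<le> m" and pm: "p = m + Suc k" and qk: "q = Suc k"
    using assms(3,4) by (auto simp: m_def k_def)
  have ve: "valid_word m (eta' p q g i)" for i
    by (auto simp: eta'_def gen_def valid_word_def m_def)
  have vc: "valid_word m (concat (map (eta' p q g) [2..<Suc k+1]))" by (rule valid_concat_map) (rule ve)
  have etaeq: "eta p q g i = eta' p q g i @ [(m, g i m = 1)]" for i
    by (simp add: eta_def gen_def m_def)
  have "(m + Suc k, beta m (Suc k) (eta p q g)) \<sim>\<^sub>M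
       (m+1, concat (map (eta' p q g) [2..<Suc k+1]) @ eta p q g 1)"
  proof (rule main_ind[OF m1])
    show "valid_word (m+1) (eta p q g 1)" unfolding etaeq using ve[of 1] m1
      by (auto intro: valid_mono)
  qed (auto simp: etaeq ve)
  also have "(m+1, concat (map (eta' p q g) [2..<Suc k+1]) @ eta p q g 1) \<sim>\<^sub>M
       (m, concat (map (eta' p q g) [2..<Suc k+1]) @ eta' p q g 1)"
  proof -
    have "(m, concat (map (eta' p q g) [2..<Suc k+1]) @ eta' p q g 1) \<sim>\<^sub>M
       (Suc m, (concat (map (eta' p q g) [2..<Suc k+1]) @ eta' p q g 1) @ [(m, g 1 m = 1)])"
      using m1 ve vc by (intro markov_eq.stab) (auto simp del: upt_Suc)
    then show ?thesis by (auto simp: etaeq intro: markov_eq.sym)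
  qed
  also have "(m, concat (map (eta' p q g) [2..<Suc k+1]) @ eta' p q g 1) \<sim>\<^sub>M
       (m, eta' p q g 1 @ concat (map (eta' p q g) [2..<Suc k+1]))"
    using ve vc by (intro markov_eq.conj) (auto simp del: upt_Suc)
  finally have R: "(m + Suc k, beta m (Suc k) (eta p q g)) \<sim>\<^sub>M
       (m, eta' p q g 1 @ concat (map (eta' p q g) [2..<Suc k+1]))" .
  have e1: "beta m (Suc k) (eta p q g) = concat (map (\<lambda>i. eta p q g i @ kappa p q i) [1..<q + 1])"
    by (simp add: beta_def pm qk)
  have e2: "eta' p q g 1 @ concat (map (eta' p q g) [2..<Suc k+1]) = concat (map (\<lambda>i. eta' p q g i) [1..<q + 1])"
  proof -
    have "[1..<q + 1] = 1 # [2..<Suc k+1]" unfolding qk by (subst upt_rec) (simp add: numeral_2_eq_2)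
    then show ?thesis by simp
  qed
  have pm': "m + Suc k = p" using pm by simp
  from R have "(p, concat (map (\<lambda>i. eta p q g i @ kappa p q i) [1..<q + 1]))
      \<sim>\<^sub>M (m, concat (map (\<lambda>i. eta' p q g i) [1..<q + 1]))"
    by (simp only: e1 e2 pm')
  then show ?thesis by (simp add: m_def)
qed

end
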